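(* Let $T$ be a rooted tree with root $r$ and nonnegative node weights $p(\cdot)$, and let $H(T,r)$ be the weighted heavy path of $T$ containing $r$. Then a node $u\in H(T,r)$ minimizing $|2p(T_u)-p(T)|$ over $u\in H(T,r)$ is a middle point of $T$, i.e., it also minimizes $|2p(T_u)-p(T)|$ over all nodes $u$ of $T$.
   Context: Edges of $T$ are directed from parent to child. For a node $u$, $T_u$ is the subtree of $T$ rooted at $u$ (consisting of $u$ and all its descendants), and for a set $S$ of nodes $p(S)=\sum_{v\in S}p(v)$; $p(T)$ is the total weight of $T$. For each internal node $u$, choose a child $v$ of $u$ with the largest subtree weight $p(T_v)$ (ties broken arbitrarily); the edge $(u,v)$ is called heavy and the other outgoing edges of $u$ are light. A weighted heavy path is a maximal path formed by concatenating heavy edges; $H(T,r)$ is the one containing the root, i.e., the path obtained starting from $r$ and repeatedly following the heavy edge until reaching a leaf. *)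

theory Defs
  imports Complex_Main
begin

definition rooted_tree :: "'a set \<Rightarrow> ('a \<times> 'a) set \<Rightarrow> 'a \<Rightarrow> bool" where
  "rooted_tree V E r \<longleftrightarrow>
     finite V \<and> r \<in> V \<and> E \<subseteq> V \<times> V \<and>
     (\<forall>v\<in>V. (r, v) \<in> E\<^sup>*) \<and>
     (\<forall>v. (v, r) \<notin> E) \<and>
     (\<forall>v u w. (u, v) \<in> E \<and> (w, v) \<in> E \<longrightarrow> u = w)"

definition subtree :: "('a \<times> 'a) set \<Rightarrow> 'a \<Rightarrow> 'a set" where
  "subtree E u = E\<^sup>* `` {u}"

definition subtree_weight :: "('a \<times> 'a) set \<Rightarrow> ('a \<Rightarrow> real) \<Rightarrow> 'a \<Rightarrow> real" where
  "subtree_weight E p u = sum p (subtree E u)"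

text \<open>A weighted heavy path from the root (for some tie-breaking choice of heavy edges):
  starts at r, each step goes from u to a child v of u of maximal subtree weight,
  and it ends at a leaf.\<close>
definition heavy_root_path ::
  "('a \<times> 'a) set \<Rightarrow> ('a \<Rightarrow> real) \<Rightarrow> 'a \<Rightarrow> 'a list \<Rightarrow> bool" where
  "heavy_root_path E p r P \<longleftrightarrow>
     P \<noteq> [] \<and> hd P = r \<and>
     (\<forall>i. Suc i < length P \<longrightarrow>
        (P ! i, P ! Suc i) \<in> E \<and>
        (\<forall>c. (P ! i, c) \<in> E \<longrightarrow> subtree_weight E p c \<le> subtree_weight E p (P ! Suc i))) \<and>
     (\<forall>c. (last P, c) \<notin> E)"

end

theory Submission
  imports Defs
begin

lemma anc_linear:
  assumes up: "\<forall>v u w. (u, v) \<in> E \<and> (w, v) \<in> E \<longrightarrow> u = w"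
  and ax: "(a, x) \<in> E\<^sup>*" and bx: "(b, x) \<in> E\<^sup>*"
  shows "(a, b) \<in> E\<^sup>* \<or> (b, a) \<in> E\<^sup>*"
  using ax bx
proof (induction arbitrary: rule: rtrancl_induct)
  case base
  then show ?case by simp
next
  case (step y z)
  from step.prems show ?case
  proof (cases rule: rtranclE)
    case base
    then show ?thesis using step.hyps by (meson rtrancl.rtrancl_into_rtrancl)
  next
    case (step w)
    then have "w = y" using up \<open>(y, z) \<in> E\<close> by blast
    then show ?thesis using step.IH step by blast
  qed
qed

lemma no_cycle:
  assumes t: "rooted_tree V E r" and x: "x \<in> V"
  shows "(x, x) \<notin> E\<^sup>+"
proof -
  have up: "\<forall>v u w. (u, v) \<in> E \<and> (w, v) \<in> E \<longrightarrow> u = w" and nr: "\<forall>v. (v, r) \<notin> E"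
    using t unfolding rooted_tree_def by auto
  have rx: "(r, x) \<in> E\<^sup>*" using t x unfolding rooted_tree_def by auto
  show ?thesis using rx
  proof (induction rule: rtrancl_induct)
    case base
    show ?case
    proof
      assume "(r, r) \<in> E\<^sup>+"
      then obtain w where "(w, r) \<in> E" by (meson tranclE)
      then show False using nr by blast
    qed
  next
    case (step y z)
    show ?case
    proof
      assume "(z, z) \<in> E\<^sup>+"
      then obtain w where zw: "(z, w) \<in> E\<^sup>*" and wz: "(w, z) \<in> E"
        by (meson tranclD2)
      then have "w = y" using up step.hyps(2) by blast
      then have "(y, y) \<in> E\<^sup>+" using zw step.hyps(2) by auto
      then show False using step.IH by blast
    qed
  qed
qed

lemma subtree_sub:
  assumes t: "rooted_tree V E r" and "c \<in> V"
  shows "subtree E c \<subseteq> V"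
proof
  fix x assume "x \<in> subtree E c"
  then have "(c, x) \<in> E\<^sup>*" unfolding subtree_def by auto
  then show "x \<in> V" using assms
    by (induction rule: rtrancl_induct) (auto simp: rooted_tree_def)
qed

theorem theorem5:
  fixes V :: "'a set" and E :: "('a \<times> 'a) set" and r :: 'a
    and p :: "'a \<Rightarrow> real" and P :: "'a list" and u :: 'a
  assumes "rooted_tree V E r"
    and "\<forall>v\<in>V. 0 \<le> p v"
    and "heavy_root_path E p r P"
    and "u \<in> set P"
    and "\<forall>w\<in>set P. \<bar>2 * subtree_weight E p u - sum p V\<bar>
                     \<le> \<bar>2 * subtree_weight E p w - sum p V\<bar>"
  shows "\<forall>v\<in>V. \<bar>2 * subtree_weight E p u - sum p V\<bar>
               \<le> \<bar>2 * subtree_weight E p v - sum p V\<bar>"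
proof
  fix v assume vV: "v \<in> V"
  have t: "rooted_tree V E r" by fact
  have fin: "finite V" and EV: "E \<subseteq> V \<times> V" and rV: "r \<in> V"
    and up: "\<forall>v u w. (u, v) \<in> E \<and> (w, v) \<in> E \<longrightarrow> u = w"
    and reach: "\<forall>v\<in>V. (r, v) \<in> E\<^sup>*"
    using t unfolding rooted_tree_def by auto
  have Pne: "P \<noteq> []" and hdP: "hd P = r"
    and Pstep: "\<And>i. Suc i < length P \<Longrightarrow> (P ! i, P ! Suc i) \<in> E \<and>
        (\<forall>c. (P ! i, c) \<in> E \<longrightarrow> subtree_weight E p c \<le> subtree_weight E p (P ! Suc i))"
    and lastP: "\<forall>c. (last P, c) \<notin> E"
    using assms(3) unfolding heavy_root_path_def by auto
  define A where "A = {i. i < length P \<and> (P ! i, v) \<in> E\<^sup>*}"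
  have "0 \<in> A" using Pne hdP reach vV unfolding A_def by (simp add: hd_conv_nth)
  moreover have "finite A" unfolding A_def by auto
  ultimately have iA: "Max A \<in> A" and imax: "\<And>j. j \<in> A \<Longrightarrow> j \<le> Max A"
    by (auto intro: Max_in)
  define i where "i = Max A"
  have il: "i < length P" and iv: "(P ! i, v) \<in> E\<^sup>*" using iA unfolding A_def i_def by auto
  define f where "f x = \<bar>2 * subtree_weight E p x - sum p V\<bar>" for x
  have key: "\<exists>w\<in>set P. f w \<le> f v"
  proof (cases "P ! i = v")
    case True
    then show ?thesis using il by (metis nth_mem order_refl)
  next
    case False
    then have "(P ! i, v) \<in> E\<^sup>+" using iv by (meson rtranclD)
    then obtain c where ic: "(P ! i, c) \<in> E" and cv: "(c, v) \<in> E\<^sup>*"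
      by (meson converse_tranclE trancl_into_rtrancl rtrancl.rtrancl_refl)
    have "P ! i \<noteq> last P" using ic lastP by metis
    then have si: "Suc i < length P" using il Pne by (metis Suc_lessI last_conv_nth diff_Suc_1)
    define h where "h = P ! Suc i"
    have ih: "(P ! i, h) \<in> E" and wch: "subtree_weight E p c \<le> subtree_weight E p h"
      using Pstep[OF si] ic unfolding h_def by auto
    have "c \<noteq> h"
    proof
      assume "c = h"
      then have "Suc i \<in> A" using si cv unfolding A_def h_def by auto
      then show False using imax unfolding i_def by fastforce
    qed
    have cV: "c \<in> V" and hV: "h \<in> V" and piV: "P ! i \<in> V" using ic ih EV by auto
    have disj: "subtree E c \<inter> subtree E h = {}"
    proof (rule ccontr)
      assume "subtree E c \<inter> subtree E h \<noteq> {}"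
      then obtain x where "(c, x) \<in> E\<^sup>*" "(h, x) \<in> E\<^sup>*" unfolding subtree_def by auto
      then have "(c, h) \<in> E\<^sup>* \<or> (h, c) \<in> E\<^sup>*" using anc_linear[OF up] by blast
      then show False
      proof
        assume "(c, h) \<in> E\<^sup>*"
        then have "(c, h) \<in> E\<^sup>+" using \<open>c \<noteq> h\<close> by (meson rtranclD)
        then obtain w where "(c, w) \<in> E\<^sup>*" "(w, h) \<in> E" by (meson tranclD2)
        then have "w = P ! i" using up ih by blast
        then have "(P ! i, P ! i) \<in> E\<^sup>+" using ic \<open>(c, w) \<in> E\<^sup>*\<close> by auto
        then show False using no_cycle[OF t piV] by blast
      next
        assume "(h, c) \<in> E\<^sup>*"
        then have "(h, c) \<in> E\<^sup>+" using \<open>c \<noteq> h\<close> by (metis rtranclD)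
        then obtain w where "(h, w) \<in> E\<^sup>*" "(w, c) \<in> E" by (meson tranclD2)
        then have "w = P ! i" using up ic by blast
        then have "(P ! i, P ! i) \<in> E\<^sup>+" using ih \<open>(h, w) \<in> E\<^sup>*\<close> by auto
        then show False using no_cycle[OF t piV] by blast
      qed
    qed
    have sc: "subtree E c \<subseteq> V" and sh: "subtree E h \<subseteq> V"
      using subtree_sub[OF t cV] subtree_sub[OF t hV] .
    have "subtree_weight E p c + subtree_weight E p h = sum p (subtree E c \<union> subtree E h)"
      unfolding subtree_weight_def using disj sc sh fin
      by (metis finite_subset sum.union_disjoint)
    also have "\<dots> \<le> sum p V"
      using sc sh fin assms(2) by (intro sum_mono2) auto
    finally have sum1: "subtree_weight E p c + subtree_weight E p h \<le> sum p V" .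
    have "subtree E v \<subseteq> subtree E c" using cv unfolding subtree_def
      by (auto intro: rtrancl_trans)
    then have sv: "subtree_weight E p v \<le> subtree_weight E p c"
      unfolding subtree_weight_def using sc fin assms(2)
      by (intro sum_mono2) (auto intro: finite_subset)
    have "f h \<le> f v" unfolding f_def using sv sum1 wch by linarith
    moreover have "h \<in> set P" unfolding h_def using si by simp
    ultimately show ?thesis by blast
  qed
  then obtain w where "w \<in> set P" "f w \<le> f v" by blast
  then show "\<bar>2 * subtree_weight E p u - sum p V\<bar> \<le> \<bar>2 * subtree_weight E p v - sum p V\<bar>"
    using assms(5) unfolding f_def by fastforce
qed

end
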